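(* Let $(\alpha,\beta)\in Q$. Then the GAFS sequence satisfies, for all $k\ge0$: (1) $Ax_{k+1}=b$; (2) $x_{k+1}>0$; (3) $c^Tx_{k+1}<c^Tx_k$.
   Context: Let $A\in\mathbb{R}^{m\times n}$ have rank $m$, $b\in\mathbb{R}^m$, $c\in\mathbb{R}^n$. Primal LP: $\min c^Tx$ s.t. $Ax=b$, $x\ge 0$; dual LP: $\max b^Ty$ s.t. $A^Ty+s=c$, $s\ge 0$. Standing assumptions: the primal has a strictly positive feasible point; $c^Tx$ is not constant on the primal feasible region; the LP has an optimal solution. For $u\in\mathbb{R}^n$, $\gamma(u)=\max\{u_i: u_i>0\}$; $\|\cdot\|$ is the Euclidean norm. For $x>0$, $X=\mathrm{diag}(x)$. GAFS sequence: fix $\alpha\in(0,1)$, $\beta\in[0,1)$, and $x_0>0$ with $Ax_0=b$. For $k\ge0$ let $X_k=\mathrm{diag}(x_k)$, $y_k=(AX_k^2A^T)^{-1}AX_k^2c$, $s_k=c-A^Ty_k$. Set $x_1=x_0-\alpha\frac{X_0^2s_0}{\gamma(X_0s_0)}$ and, for $k\ge1$, $x_{k+1}=x_k-\alpha\frac{X_k^2s_k}{\gamma(X_ks_k)}+\beta\frac{x_k-x_{k-1}}{\|X_k^{-1}(x_k-x_{k-1})\|_\infty}$ (it is assumed all quantities are well defined). $Q=\{(\alpha,\beta): 0<\alpha<1,\ 0\le\beta<1/\phi,\ \alpha+\beta\le 2/3\}$ with $\phi=(1+\sqrt5)/2$. *)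

theory Defs
  imports "HOL-Analysis.Analysis"
begin

text \<open>gamma(u) = max of the positive entries of u (meaningful when some entry is positive).\<close>
definition gam :: "real^'n \<Rightarrow> real" where
  "gam u = Max {u $ i | i. u $ i > 0}"

definition diagm :: "real^'n \<Rightarrow> real^'n^'n" where
  "diagm x = (\<chi> i j. if i = j then x $ i else 0)"

definition infnorm_v :: "real^'n \<Rightarrow> real" where
  "infnorm_v v = Max (range (\<lambda>i. \<bar>v $ i\<bar>))"

definition dual_y :: "real^'n^'m \<Rightarrow> real^'n \<Rightarrow> real^'n \<Rightarrow> real^'m" where
  "dual_y A c x = matrix_inv (A ** diagm x ** diagm x ** transpose A) *v (A ** diagm x ** diagm x *v c)"

definition slack_s :: "real^'n^'m \<Rightarrow> real^'n \<Rightarrow> real^'n \<Rightarrow> real^'n" where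
  "slack_s A c x = c - transpose A *v dual_y A c x"

definition as_step :: "real^'n^'m \<Rightarrow> real^'n \<Rightarrow> real^'n \<Rightarrow> real^'n" where
  "as_step A c x = (1 / gam (diagm x *v slack_s A c x)) *\<^sub>R (diagm x ** diagm x *v slack_s A c x)"

definition mom_step :: "real^'n \<Rightarrow> real^'n \<Rightarrow> real^'n" where
  "mom_step xk xp = (1 / infnorm_v (\<chi> i. (xk $ i - xp $ i) / xk $ i)) *\<^sub>R (xk - xp)"

fun gafs :: "real^'n^'m \<Rightarrow> real^'n \<Rightarrow> real \<Rightarrow> real \<Rightarrow> real^'n \<Rightarrow> nat \<Rightarrow> real^'n" where
  "gafs A c \<alpha> \<beta> x0 0 = x0"
| "gafs A c \<alpha> \<beta> x0 (Suc 0) = x0 - \<alpha> *\<^sub>R as_step A c x0"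
| "gafs A c \<alpha> \<beta> x0 (Suc (Suc k)) =
     gafs A c \<alpha> \<beta> x0 (Suc k) - \<alpha> *\<^sub>R as_step A c (gafs A c \<alpha> \<beta> x0 (Suc k))
     + \<beta> *\<^sub>R mom_step (gafs A c \<alpha> \<beta> x0 (Suc k)) (gafs A c \<alpha> \<beta> x0 k)"

text \<open>Well-definedness of the quantities used at step k (to form x_{k+1}):
  A X_k^2 A^T invertible, X_k s_k has a positive entry (gamma defined),
  and for k >= 1, x_k \<noteq> x_{k-1} (momentum normalisation defined).\<close>
definition gafs_wd :: "real^'n^'m \<Rightarrow> real^'n \<Rightarrow> real \<Rightarrow> real \<Rightarrow> real^'n \<Rightarrow> nat \<Rightarrow> bool" where
  "gafs_wd A c \<alpha> \<beta> x0 k \<longleftrightarrow>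
     (let x = gafs A c \<alpha> \<beta> x0 k in
       invertible (A ** diagm x ** diagm x ** transpose A)
       \<and> (\<exists>i. (diagm x *v slack_s A c x) $ i > 0)
       \<and> (k \<ge> 1 \<longrightarrow> x \<noteq> gafs A c \<alpha> \<beta> x0 (k - 1)))"

definition golden :: real where "golden = (1 + sqrt 5) / 2"

definition Qreg :: "(real \<times> real) set" where
  "Qreg = {(a, b). 0 < a \<and> a < 1 \<and> 0 \<le> b \<and> b < 1 / golden \<and> a + b \<le> 2/3}"

end

theory Submission
  imports Defs
begin

lemma inv_right: "invertible M \<Longrightarrow> M ** matrix_inv M = mat 1"
  unfolding invertible_def matrix_inv_def by (rule someI_ex[THEN conjunct1])

lemma diagm_mulv: "diagm x *v v = (\<chi> i. x$i * v$i)"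
proof -
  have "(\<Sum>j\<in>UNIV. (if i = j then x$i else 0) * v$j) = x$i * v$i" for i
  proof -
    have "(\<lambda>j. (if i = j then x$i else 0) * v$j) = (\<lambda>j. if i = j then x$i * v$i else 0)" by auto
    thus ?thesis by (simp only:) simp
  qed
  thus ?thesis by (simp add: diagm_def matrix_vector_mult_def vec_eq_iff)
qed

lemma A_as_zero:
  assumes inv: "invertible (A ** diagm x ** diagm x ** transpose A)"
  shows "A *v as_step A c x = 0"
proof -
  let ?M = "A ** diagm x ** diagm x ** transpose A"
  let ?w = "A ** diagm x ** diagm x *v c"
  have "A *v (diagm x ** diagm x *v slack_s A c x)
      = (A ** diagm x ** diagm x) *v c - ?M *v (matrix_inv ?M *v ?w)"
    by (simp add: slack_s_def dual_y_def matrix_vector_mult_diff_distrib matrix_vector_mul_assoc matrix_mul_assoc)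
  also have "\<dots> = 0"
  proof -
    have "?M *v (matrix_inv ?M *v ?w) = ?w"
      by (subst matrix_vector_mul_assoc) (simp add: inv_right[OF inv])
    thus ?thesis by simp
  qed
  finally show ?thesis by (simp add: as_step_def matrix_vector_mult_scaleR)
qed

lemma gam_props:
  assumes "\<exists>i. u $ i > (0::real)"
  shows "gam u > 0" "\<And>i. u $ i \<le> gam u"
proof -
  let ?S = "{u $ i | i. u $ i > 0}"
  have fin: "finite ?S"
  proof -
    have "?S \<subseteq> range (\<lambda>i. u $ i)" by auto
    thus ?thesis by (rule finite_subset) simp
  qed
  obtain j where j: "u $ j > 0" using assms by auto
  have "u $ j \<in> ?S" using j by auto
  hence "u $ j \<le> gam u" unfolding gam_def using fin by (rule Max_ge[rotated])
  thus "gam u > 0" using j by simp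
  fix i show "u $ i \<le> gam u"
  proof (cases "u $ i > 0")
    case True
    hence "u $ i \<in> ?S" by auto
    thus ?thesis unfolding gam_def using fin by (rule Max_ge[rotated])
  next
    case False thus ?thesis using \<open>gam u > 0\<close> by simp
  qed
qed

lemma as_comp:
  "as_step A c x $ i = x$i * (diagm x *v slack_s A c x)$i / gam (diagm x *v slack_s A c x)"
  by (simp add: as_step_def diagm_mulv matrix_vector_mul_assoc[symmetric] power2_eq_square)


lemma as_le:
  assumes "\<exists>i. (diagm x *v slack_s A c x) $ i > 0" and "x $ i > 0"
  shows "as_step A c x $ i \<le> x $ i"
proof -
  let ?u = "diagm x *v slack_s A c x"
  have g: "gam ?u > 0" "?u $ i \<le> gam ?u" using gam_props[OF assms(1)] by auto
  have "x$i * ?u$i \<le> x$i * gam ?u" using g assms(2) by (simp add: mult_left_mono)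
  hence "x$i * ?u$i / gam ?u \<le> x$i" using g(1) by (simp add: divide_le_eq)
  thus ?thesis by (simp add: as_comp)
qed


lemma c_as_pos:
  assumes inv: "invertible (A ** diagm x ** diagm x ** transpose A)"
    and pos: "\<exists>i. (diagm x *v slack_s A c x) $ i > 0"
  shows "c \<bullet> as_step A c x > 0"
proof -
  define s where "s = slack_s A c x"
  define y where "y = dual_y A c x"
  define u where "u = diagm x *v s"
  define v where "v = diagm x ** diagm x *v s"
  define g where "g = gam u"
  have g: "g > 0" using gam_props(1)[OF pos] unfolding g_def u_def s_def .
  have as: "as_step A c x = (1/g) *\<^sub>R v" unfolding as_step_def g_def u_def v_def s_def ..
  have "A *v ((1/g) *\<^sub>R v) = 0" using A_as_zero[OF inv, of c] unfolding as .
  hence Av: "A *v v = 0" using g by (simp add: matrix_vector_mult_scaleR)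
  have c_eq: "c = s + transpose A *v y" by (simp add: slack_s_def s_def y_def)
  have "c \<bullet> v = s \<bullet> v + (transpose A *v y) \<bullet> v"
    by (subst c_eq) (simp only: inner_add_left)
  also have "(transpose A *v y) \<bullet> v = y \<bullet> (A *v v)"
    by (simp add: dot_lmul_matrix)
  also have "\<dots> = 0" using Av by simp
  finally have cv: "c \<bullet> v = s \<bullet> v" by simp
  have vi: "v $ i = x$i * u$i" for i
    unfolding v_def u_def by (simp add: diagm_mulv matrix_vector_mul_assoc[symmetric])
  have ui: "u $ i = x$i * s$i" for i
    unfolding u_def by (simp add: diagm_mulv)
  have "s \<bullet> v = (\<Sum>i\<in>UNIV. (u$i)^2)"
    unfolding inner_vec_def by (rule sum.cong) (simp_all add: vi ui power2_eq_square)
  moreover obtain j where j: "u $ j > 0" using pos unfolding u_def s_def by auto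
  have "(\<Sum>i\<in>UNIV. (u$i)^2) > 0"
  proof -
    have "(u$j)^2 \<le> (\<Sum>i\<in>UNIV. (u$i)^2)"
      by (rule member_le_sum) auto
    moreover have "(u$j)^2 > 0" using j by simp
    ultimately show ?thesis by linarith
  qed
  ultimately have "c \<bullet> v > 0" using cv by simp
  thus ?thesis using g unfolding as by simp
qed


lemma infnorm_props:
  assumes "xk \<noteq> xp" "\<forall>i. xk $ i > (0::real)"
  defines "N \<equiv> infnorm_v (\<chi> i. (xk $ i - xp $ i) / xk $ i)"
  shows "N > 0" "\<And>i. \<bar>(xk $ i - xp $ i) / xk $ i\<bar> \<le> N"
proof -
  define d where "d = (\<chi> i. (xk $ i - xp $ i) / xk $ i)"
  have di: "d $ i = (xk $ i - xp $ i) / xk $ i" for i unfolding d_def by simp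
  have N: "N = Max (range (\<lambda>i. \<bar>d $ i\<bar>))" unfolding N_def infnorm_v_def d_def ..
  have ge: "\<bar>d $ i\<bar> \<le> N" for i
  proof -
    have "finite (range (\<lambda>i. \<bar>d $ i\<bar>))" by simp
    moreover have "\<bar>d $ i\<bar> \<in> range (\<lambda>i. \<bar>d $ i\<bar>)" by (rule rangeI)
    ultimately show ?thesis unfolding N by (rule Max_ge)
  qed
  thus "\<And>i. \<bar>(xk $ i - xp $ i) / xk $ i\<bar> \<le> N" unfolding di .
  obtain j where j: "xk $ j \<noteq> xp $ j" using assms(1) by (auto simp: vec_eq_iff)
  have "xk $ j > 0" using assms(2) by blast
  hence "\<bar>d $ j\<bar> > 0" using j unfolding di by simp
  thus "N > 0" using ge[of j] by linarith
qed

lemma mom_ge: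
  assumes "xk \<noteq> xp" "\<forall>i. xk $ i > (0::real)"
  shows "mom_step xk xp $ i \<ge> - xk $ i"
proof -
  define N where "N = infnorm_v (\<chi> i. (xk $ i - xp $ i) / xk $ i)"
  have N: "N > 0" "\<bar>(xk $ i - xp $ i) / xk $ i\<bar> \<le> N"
    using infnorm_props[OF assms] unfolding N_def by auto
  have xi: "xk $ i > 0" using assms(2) by blast
  have "\<bar>(xk $ i - xp $ i) / xk $ i\<bar> = \<bar>xk $ i - xp $ i\<bar> / xk $ i" using xi by simp
  hence "\<bar>xk $ i - xp $ i\<bar> \<le> N * xk $ i" using N(2) xi by (simp add: divide_le_eq)
  hence "- (N * xk $ i) \<le> xk $ i - xp $ i" by linarith
  hence "- xk $ i \<le> (xk $ i - xp $ i) / N" using N(1) by (simp add: le_divide_eq mult.commute)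
  moreover have "mom_step xk xp $ i = (xk $ i - xp $ i) / N" unfolding mom_step_def N_def[symmetric] by simp
  ultimately show ?thesis by simp
qed

lemma mom_A: "A *v mom_step xk xp = (1 / infnorm_v (\<chi> i. (xk $ i - xp $ i) / xk $ i)) *\<^sub>R (A *v xk - A *v xp)"
  unfolding mom_step_def by (simp only: matrix_vector_mult_scaleR matrix_vector_mult_diff_distrib)

lemma mom_c:
  assumes "xk \<noteq> xp" "\<forall>i. xk $ i > (0::real)" "c \<bullet> xk < c \<bullet> xp"
  shows "c \<bullet> mom_step xk xp < 0"
proof -
  define N where "N = infnorm_v (\<chi> i. (xk $ i - xp $ i) / xk $ i)"
  have N: "N > 0" using infnorm_props[OF assms(1,2)] unfolding N_def by auto
  have "c \<bullet> mom_step xk xp = (c \<bullet> xk - c \<bullet> xp) / N"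
    unfolding mom_step_def N_def[symmetric] by (simp add: inner_diff_right)
  thus ?thesis using N assms(3) by (simp add: divide_neg_pos)
qed


lemma main:
  fixes A :: "real^'n^'m" and b :: "real^'m" and c :: "real^'n"
  assumes Q: "(\<alpha>, \<beta>) \<in> Qreg"
    and x0_feas: "A *v x0 = b" and x0_pos: "\<forall>i. x0 $ i > 0"
  shows "(\<forall>j\<le>k. gafs_wd A c \<alpha> \<beta> x0 j) \<Longrightarrow> A *v gafs A c \<alpha> \<beta> x0 k = b \<and> A *v gafs A c \<alpha> \<beta> x0 (Suc k) = b
       \<and> (\<forall>i. gafs A c \<alpha> \<beta> x0 (Suc k) $ i > 0)
       \<and> c \<bullet> gafs A c \<alpha> \<beta> x0 (Suc k) < c \<bullet> gafs A c \<alpha> \<beta> x0 k"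
proof (induction k)
  case 0
  let ?x = "gafs A c \<alpha> \<beta> x0 0"
  have wd: "invertible (A ** diagm x0 ** diagm x0 ** transpose A)"
    "\<exists>i. (diagm x0 *v slack_s A c x0) $ i > 0"
    using 0[rule_format, of 0] by (auto simp: gafs_wd_def Let_def)
  have a: "0 < \<alpha>" "\<alpha> < 1" using Q by (auto simp: Qreg_def)
  have "A *v gafs A c \<alpha> \<beta> x0 (Suc 0) = b"
    using A_as_zero[OF wd(1), of c] x0_feas
    by (simp add: matrix_vector_mult_diff_distrib matrix_vector_mult_scaleR)
  moreover have "\<forall>i. gafs A c \<alpha> \<beta> x0 (Suc 0) $ i > 0"
  proof
    fix i
    have "as_step A c x0 $ i \<le> x0 $ i" using as_le[OF wd(2)] x0_pos by auto
    hence "\<alpha> * as_step A c x0 $ i \<le> \<alpha> * x0 $ i" using a by (simp add: mult_left_mono)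
    moreover have "\<alpha> * x0 $ i < x0 $ i" using a x0_pos[rule_format, of i] by simp
    ultimately show "gafs A c \<alpha> \<beta> x0 (Suc 0) $ i > 0" by simp
  qed
  moreover have "c \<bullet> gafs A c \<alpha> \<beta> x0 (Suc 0) < c \<bullet> gafs A c \<alpha> \<beta> x0 0"
    using c_as_pos[OF wd] a by (simp add: inner_diff_right)
  ultimately show ?case using x0_feas by simp
next
  case (Suc k)
  let ?xp = "gafs A c \<alpha> \<beta> x0 k"
  let ?x = "gafs A c \<alpha> \<beta> x0 (Suc k)"
  have IH: "A *v ?x = b" "\<forall>i. ?x $ i > 0" "c \<bullet> ?x < c \<bullet> ?xp"
    using Suc by auto
  have feas_p: "A *v ?xp = b"
    using Suc by auto
  have wd: "invertible (A ** diagm ?x ** diagm ?x ** transpose A)"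
    "\<exists>i. (diagm ?x *v slack_s A c ?x) $ i > 0" "?x \<noteq> ?xp"
    using Suc.prems[rule_format, of "Suc k"] by (auto simp: gafs_wd_def Let_def)
  have a: "0 < \<alpha>" "0 \<le> \<beta>" "\<alpha> + \<beta> \<le> 2/3" using Q by (auto simp: Qreg_def)
  have eq: "gafs A c \<alpha> \<beta> x0 (Suc (Suc k)) = ?x - \<alpha> *\<^sub>R as_step A c ?x + \<beta> *\<^sub>R mom_step ?x ?xp"
    by simp
  have "A *v gafs A c \<alpha> \<beta> x0 (Suc (Suc k)) = b"
    unfolding eq using A_as_zero[OF wd(1), of c] IH(1) feas_p
    by (simp add: matrix_vector_mult_diff_distrib matrix_vector_mult_scaleR
        matrix_vector_right_distrib mom_A)
  moreover have "\<forall>i. gafs A c \<alpha> \<beta> x0 (Suc (Suc k)) $ i > 0"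
  proof
    fix i
    have xi: "?x $ i > 0" using IH(2) by auto
    have "as_step A c ?x $ i \<le> ?x $ i" using as_le[OF wd(2)] xi by auto
    hence 1: "\<alpha> * as_step A c ?x $ i \<le> \<alpha> * ?x $ i" using a by (simp add: mult_left_mono)
    have m: "mom_step ?x ?xp $ i \<ge> - ?x $ i" using mom_ge[OF wd(3) IH(2)] by auto
    have 2: "\<beta> * mom_step ?x ?xp $ i \<ge> \<beta> * (- ?x $ i)" using mult_left_mono[OF m a(2)] by simp
    have "(\<alpha> + \<beta>) * ?x $ i \<le> (2/3) * ?x $ i" using mult_right_mono[OF a(3)] xi by simp
    hence 3: "(\<alpha> + \<beta>) * ?x $ i < ?x $ i" using xi by linarith
    show "gafs A c \<alpha> \<beta> x0 (Suc (Suc k)) $ i > 0"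
      unfolding eq using 1 2 3 by (simp add: algebra_simps)
  qed
  moreover have "c \<bullet> gafs A c \<alpha> \<beta> x0 (Suc (Suc k)) < c \<bullet> ?x"
  proof -
    have "c \<bullet> as_step A c ?x > 0" using c_as_pos[OF wd(1,2)] .
    moreover have "c \<bullet> mom_step ?x ?xp < 0" using mom_c[OF wd(3) IH(2) IH(3)] .
    ultimately show ?thesis unfolding eq using a
      by (simp add: inner_diff_right inner_add_right)
         (smt (verit) mult_pos_pos mult_nonneg_nonpos)
  qed
  ultimately show ?case using IH(1) by simp
qed

theorem theorem2:
  fixes A :: "real^'n^'m" and b :: "real^'m" and c :: "real^'n"
    and x0 :: "real^'n" and \<alpha> \<beta> :: real and k :: nat
  assumes rankA: "rank A = CARD('m)"
    and strict_feas: "\<exists>x. A *v x = b \<and> (\<forall>i. x $ i > 0)"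
    and nonconst: "\<not> (\<exists>d. \<forall>x. A *v x = b \<and> (\<forall>i. x $ i \<ge> 0) \<longrightarrow> c \<bullet> x = d)"
    and has_opt: "\<exists>x. A *v x = b \<and> (\<forall>i. x $ i \<ge> 0) \<and>
                    (\<forall>z. A *v z = b \<and> (\<forall>i. z $ i \<ge> 0) \<longrightarrow> c \<bullet> x \<le> c \<bullet> z)"
    and Q: "(\<alpha>, \<beta>) \<in> Qreg"
    and x0_feas: "A *v x0 = b" and x0_pos: "\<forall>i. x0 $ i > 0"
    and wd: "\<forall>j\<le>k. gafs_wd A c \<alpha> \<beta> x0 j"
  shows "A *v gafs A c \<alpha> \<beta> x0 (Suc k) = b
       \<and> (\<forall>i. gafs A c \<alpha> \<beta> x0 (Suc k) $ i > 0)
       \<and> c \<bullet> gafs A c \<alpha> \<beta> x0 (Suc k) < c \<bullet> gafs A c \<alpha> \<beta> x0 k"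
  using main[OF Q x0_feas x0_pos] wd by blast

end
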